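(* Let $N\ge1$, $n>0$, $k>0$, and $\gamma>0$, and suppose all $N$ channels have SNR $\gamma$. Then the optimization problem $$\max_{k_0,\dots,k_{N-1}}\prod_{i=0}^{N-1}\bigl(1-\epsilon(n,k_i,\gamma)\bigr)\quad\text{subject to }\sum_{i=0}^{N-1}k_i=k,\ k_i\ge0,$$ over real $k_i$ (equivalently, minimizing the message-splitting average AoI $\bar\Delta_{\mathrm{MS}}(n)$ over the message split) is solved by $\mathbf{k}^*=\left(\frac kN,\dots,\frac kN\right)$.
   Context: $Q(x)=\frac{1}{\sqrt{2\pi}}\int_x^\infty e^{-t^2/2}dt$ and $\epsilon(n,k,\gamma)=Q\!\left(\frac{\frac12\log_2(1+\gamma)-\frac kn}{\log_2(e)\sqrt{\frac{1}{2n}\left(1-\frac{1}{(1+\gamma)^2}\right)}}\right)$. In the message splitting (MS) scheme the $k$ message bits are split into fragments $k_0,\dots,k_{N-1}$ with $\sum k_i=k$, fragment $i$ is encoded with blocklength $n$ on channel $i$, the error probability is $\epsilon_{\mathrm{MS}}(n)=1-\prod_{i}(1-\epsilon(n,k_i,\gamma_i))$, and $\bar\Delta_{\mathrm{MS}}(n)=\frac{n(1+\epsilon_{\mathrm{MS}}(n))}{2(1-\epsilon_{\mathrm{MS}}(n))}+n$. *)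

theory Defs
  imports "HOL-Analysis.Analysis"
begin

definition Qfun :: "real \<Rightarrow> real" where
  "Qfun x = (1 / sqrt (2 * pi)) * (LBINT t:{x..}. exp (- (t\<^sup>2) / 2))"

definition eps :: "real \<Rightarrow> real \<Rightarrow> real \<Rightarrow> real" where
  "eps n k \<gamma> = Qfun ((1/2 * log 2 (1 + \<gamma>) - k / n) /
      (log 2 (exp 1) * sqrt (1 / (2 * n) * (1 - 1 / (1 + \<gamma>)\<^sup>2))))"

end

theory Submission imports Defs "HOL-Probability.Probability" begin

lemma sn_int[simp]: "integrable lborel std_normal_density" by simp

lemma sn_setint: "set_integrable lborel A std_normal_density" if "A \<in> sets lborel"
  unfolding set_integrable_def using integrable_mult_indicator[OF that sn_int] .

lemma Qfun_eq: "Qfun x = (LBINT t:{x..}. std_normal_density t)"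
  unfolding Qfun_def std_normal_density_def by simp

lemma P_eq: "1 - Qfun x = (LBINT t:{..<x}. std_normal_density t)"
proof -
  have "(LBINT t:UNIV. std_normal_density t) = (LBINT t:{..<x}. std_normal_density t) + (LBINT t:{x..}. std_normal_density t)"
    by (subst set_integral_Un[symmetric]) (auto intro!: sn_setint arg_cong[where f="\<lambda>S. set_lebesgue_integral lborel S _"])
  moreover have "(LBINT t:UNIV. std_normal_density t) = 1"
    unfolding set_lebesgue_integral_def by simp
  ultimately show ?thesis using Qfun_eq by simp
qed

lemma sn_cont: "continuous_on S std_normal_density"
  unfolding std_normal_density_def by (auto intro!: continuous_intros)

lemma Qfun_deriv: "(Qfun has_real_derivative - std_normal_density t) (at t)"
proof -
  define b where "b = t + 1"
  define C where "C = (LBINT s:{b<..}. std_normal_density s)"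
  have eq: "Qfun x = integral {x..b} std_normal_density + C" if "x \<le> b" for x
  proof -
    have "Qfun x = (LBINT s:{x..b}. std_normal_density s) + C"
      unfolding Qfun_eq C_def using that
      by (subst set_integral_Un[symmetric]) (auto intro!: sn_setint arg_cong[where f="\<lambda>S. set_lebesgue_integral lborel S _"])
    also have "(LBINT s:{x..b}. std_normal_density s) = integral {x..b} std_normal_density"
      by (rule set_borel_integral_eq_integral(2)) (auto intro!: sn_setint)
    finally show ?thesis .
  qed
  have "((\<lambda>x. integral {x..b} std_normal_density) has_real_derivative - std_normal_density t) (at t within {t-1..b})"
    by (rule integral_has_real_derivative') (auto simp: b_def intro!: sn_cont)
  then have "((\<lambda>x. integral {x..b} std_normal_density) has_real_derivative - std_normal_density t) (at t within {t-1<..<b})"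
    by (rule has_field_derivative_subset) auto
  then have d3: "((\<lambda>x. integral {x..b} std_normal_density) has_real_derivative - std_normal_density t) (at t)"
    by (subst (asm) at_within_open) (auto simp: b_def)
  have "((\<lambda>x. integral {x..b} std_normal_density + C) has_real_derivative - std_normal_density t + 0) (at t)"
    by (rule DERIV_add[OF d3 DERIV_const])
  then have "((\<lambda>x. integral {x..b} std_normal_density + C) has_real_derivative - std_normal_density t) (at t)"
    by simp
  then show ?thesis
    by (rule has_field_derivative_transform_within_open[where S="{t-1<..<b}"]) (auto simp: b_def eq)
qed

lemma sn_mult: "std_normal_density a * std_normal_density b = (1/(2*pi)) * exp (-(a\<^sup>2 + b\<^sup>2)/2)"
proof -
  have 1: "(1 / sqrt (2 * pi)) * (1 / sqrt (2 * pi)) = 1/(2*pi)"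
    by (simp add: real_sqrt_mult[symmetric])
  have 2: "exp (- a\<^sup>2 / 2) * exp (- b\<^sup>2 / 2) = exp (-(a\<^sup>2 + b\<^sup>2)/2)"
    by (simp add: exp_add[symmetric] diff_divide_distrib)
  have "std_normal_density a * std_normal_density b = ((1 / sqrt (2 * pi)) * (1 / sqrt (2 * pi))) * (exp (- a\<^sup>2 / 2) * exp (- b\<^sup>2 / 2))"
    unfolding std_normal_density_def by (simp only: ac_simps)
  then show ?thesis using 1 2 by simp
qed

lemma ratio: assumes "x \<le> y"
  shows "std_normal_density y * (1 - Qfun x) \<le> std_normal_density x * (1 - Qfun y)"
proof -
  define d where "d = x - y"
  define f where "f t = indicator {..<x} t * (std_normal_density y * std_normal_density t)" for t :: real
  define g where "g t = indicator {..<y} t * (std_normal_density x * std_normal_density t)" for t :: real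
  have intf: "integrable lborel f" unfolding f_def
    using integrable_mult_indicator[of "{..<x}" lborel "\<lambda>t. std_normal_density y * std_normal_density t"] by simp
  have intg: "integrable lborel g" unfolding g_def
    using integrable_mult_indicator[of "{..<y}" lborel "\<lambda>t. std_normal_density x * std_normal_density t"] by simp
  have "std_normal_density y * (1 - Qfun x) = integral\<^sup>L lborel f"
    unfolding P_eq set_lebesgue_integral_def f_def by (simp add: mult.left_commute)
  also have "\<dots> = (\<integral>u. f (d + 1 * u) \<partial>lborel)"
    using lborel_integral_real_affine[of 1 f d] by simp
  also have "\<dots> \<le> integral\<^sup>L lborel g"
  proof (rule integral_mono)
    show "integrable lborel (\<lambda>u. f (d + 1 * u))"
      using lborel_integrable_real_affine_iff[of 1 f d] intf by simp
    show "integrable lborel g" by (rule intg)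
    fix u :: real
    show "f (d + 1 * u) \<le> g u"
    proof (cases "u < y")
      case True
      have "x\<^sup>2 + u\<^sup>2 \<le> y\<^sup>2 + (d+u)\<^sup>2"
      proof -
        have "y\<^sup>2 + (d+u)\<^sup>2 - (x\<^sup>2 + u\<^sup>2) = 2 * (y - x) * (y - u)"
          unfolding d_def by (simp add: power2_eq_square algebra_simps)
        moreover have "0 \<le> 2 * (y - x) * (y - u)" using True assms by simp
        ultimately show ?thesis by linarith
      qed
      then have "exp (-(y\<^sup>2 + (d+u)\<^sup>2)/2) \<le> exp (-(x\<^sup>2 + u\<^sup>2)/2)" by simp
      then have h: "(1/(2*pi)) * exp (-(y\<^sup>2 + (d+u)\<^sup>2)/2) \<le> (1/(2*pi)) * exp (-(x\<^sup>2 + u\<^sup>2)/2)"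
        by (intro mult_left_mono) auto
      have "d + u < x" using True by (simp add: d_def)
      then have "f (d + 1 * u) = (1/(2*pi)) * exp (-(y\<^sup>2 + (d+u)\<^sup>2)/2)"
        unfolding f_def by (simp only: sn_mult indicator_simps lessThan_iff if_True mult_1 mult_1_left)
      moreover have "g u = (1/(2*pi)) * exp (-(x\<^sup>2 + u\<^sup>2)/2)"
        using True unfolding g_def by (simp only: sn_mult indicator_simps lessThan_iff if_True mult_1 mult_1_left)
      ultimately show ?thesis using h by simp
    next
      case False
      then show ?thesis unfolding f_def g_def d_def by (simp add: indicator_def)
    qed
  qed
  also have "\<dots> = std_normal_density x * (1 - Qfun y)"
    unfolding P_eq set_lebesgue_integral_def g_def by (simp add: mult.left_commute)
  finally show ?thesis .
qed

lemma P_pos: "0 < 1 - Qfun x"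
proof -
  define m where "m = std_normal_density (\<bar>x\<bar> + 2)"
  have mpos: "0 < m" unfolding m_def by (simp add: normal_density_pos)
  have "(LBINT s:{x-2..x-1}. std_normal_density s) \<le> (LBINT s:{..<x}. std_normal_density s)"
    using sn_setint[of "{x-2..x-1}"] sn_setint[of "{..<x}"]
    unfolding set_lebesgue_integral_def set_integrable_def
    by (intro integral_mono) (auto split: split_indicator)
  moreover have "(LBINT s:{x-2..x-1}. std_normal_density s) = integral {x-2..x-1} std_normal_density"
    by (rule set_borel_integral_eq_integral(2)) (auto intro!: sn_setint)
  moreover have "integral {x-2..x-1} (\<lambda>_. m) \<le> integral {x-2..x-1} std_normal_density"
  proof (rule integral_le)
    show "(\<lambda>_. m) integrable_on {x-2..x-1}" by (rule integrable_continuous_interval) (rule continuous_on_const)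
    show "std_normal_density integrable_on {x-2..x-1}"
      by (rule integrable_continuous_interval) (rule sn_cont)
    fix t assume "t \<in> {x-2..x-1}"
    then have "\<bar>t\<bar> \<le> \<bar>\<bar>x\<bar> + 2\<bar>" by auto
    then have "t\<^sup>2 \<le> (\<bar>x\<bar> + 2)\<^sup>2" by (simp only: abs_le_square_iff)
    then show "m \<le> std_normal_density t"
      unfolding m_def std_normal_density_def by (intro mult_left_mono) auto
  qed
  moreover have "integral {x-2..x-1} (\<lambda>_. m) = m" by simp
  ultimately show ?thesis using mpos P_eq[of x] by linarith
qed

theorem corollary1:
  fixes N :: nat and n k \<gamma> :: real and ks :: "nat \<Rightarrow> real"
  assumes "N \<ge> 1" and "n > 0" and "k > 0" and "\<gamma> > 0"
    and "\<forall>i<N. ks i \<ge> 0" and "(\<Sum>i<N. ks i) = k"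
  shows "(\<Prod>i<N. 1 - eps n (ks i) \<gamma>) \<le> (\<Prod>i<N. 1 - eps n (k / real N) \<gamma>)"
proof -
  define a where "a = 1/2 * log 2 (1 + \<gamma>)"
  define c where "c = log 2 (exp 1) * sqrt (1 / (2 * n) * (1 - 1 / (1 + \<gamma>)\<^sup>2))"
  define z where "z kk = (a - kk / n) / c" for kk
  define P where "P x = 1 - Qfun x" for x
  define G where "G kk = - ln (P (z kk))" for kk
  define G' where "G' kk = std_normal_density (z kk) / (P (z kk) * (n * c))" for kk
  have epsz: "1 - eps n kk \<gamma> = P (z kk)" for kk
    unfolding eps_def P_def z_def a_def c_def by simp
  have "1 < (1 + \<gamma>) * (1 + \<gamma>)" using assms(4)
  proof -
    have "0 < \<gamma>*\<gamma> + \<gamma>*2" using assms(4) by (intro add_pos_pos) auto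
    then show ?thesis by (simp add: algebra_simps)
  qed
  then have "1 / (1 + \<gamma>)\<^sup>2 < 1" using assms(4) by (simp add: power2_eq_square)
  then have cpos: "c > 0" unfolding c_def using assms(2) by (simp add: log_def)
  have Ppos: "P x > 0" for x unfolding P_def by (rule P_pos)
  have dP: "(P has_real_derivative std_normal_density x) (at x)" for x
    unfolding P_def using DERIV_diff[OF DERIV_const Qfun_deriv[of x]] by simp
  have dz: "(z has_real_derivative (- (1/n) / c)) (at x)" for x
    unfolding z_def using cpos assms(2) by (auto intro!: derivative_eq_intros)
  have dG: "(G has_real_derivative G' x) (at x)" for x
  proof -
    have "((\<lambda>kk. P (z kk)) has_real_derivative std_normal_density (z x) * (- (1/n) / c)) (at x)"
      by (rule DERIV_chain2[OF dP dz])
    then have "((\<lambda>kk. ln (P (z kk))) has_real_derivative inverse (P (z x)) * (std_normal_density (z x) * (- (1/n) / c))) (at x)"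
      using DERIV_chain2[where g="\<lambda>kk. P (z kk)" and x=x and f=ln, OF DERIV_ln[OF Ppos[of "z x"]]] by blast
    then have "(G has_real_derivative - (inverse (P (z x)) * (std_normal_density (z x) * (- (1/n) / c)))) (at x)"
      unfolding G_def by (rule DERIV_minus)
    moreover have "- (inverse (P (z x)) * (std_normal_density (z x) * (- (1/n) / c))) = G' x"
      unfolding G'_def using Ppos[of "z x"] cpos assms(2) by (simp add: field_simps)
    ultimately show ?thesis by simp
  qed
  have mono: "G' x \<le> G' y" if "x \<le> y" for x y
  proof -
    have "z y \<le> z x" unfolding z_def using that cpos assms(2)
      by (intro divide_right_mono) (auto simp: divide_right_mono)
    from ratio[OF this] have r: "std_normal_density (z x) * P (z y) \<le> std_normal_density (z y) * P (z x)"
      unfolding P_def .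
    have "G' x = std_normal_density (z x) / (P (z x) * (n * c))" by (simp add: G'_def)
    also have "\<dots> \<le> std_normal_density (z y) / (P (z y) * (n * c))"
      using r Ppos[of "z x"] Ppos[of "z y"] cpos assms(2)
      by (simp add: divide_simps mult.commute mult.left_commute)
    finally show ?thesis by (simp add: G'_def)
  qed
  have conv: "convex_on UNIV G"
    by (rule convex_on_realI[where f'=G']) (auto intro: dG mono)
  have Nne: "{..<N} \<noteq> {}" using assms(1) lessThan_empty_iff by (metis not_one_le_zero)
  have J: "G (\<Sum>i<N. (1 / real N) *\<^sub>R ks i) \<le> (\<Sum>i<N. (1 / real N) * G (ks i))"
    by (rule convex_on_sum[OF _ Nne conv]) (use assms(1) in auto)
  have S1: "(\<Sum>i<N. (1 / real N) *\<^sub>R ks i) = k / real N"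
    using assms(6) by (simp add: sum_divide_distrib[symmetric])
  have S2: "(\<Sum>i<N. (1 / real N) * G (ks i)) = (1 / real N) * (\<Sum>i<N. G (ks i))"
    by (simp add: sum_distrib_left)
  have "G (k / real N) \<le> (1 / real N) * (\<Sum>i<N. G (ks i))"
    using J unfolding S1 S2 .
  then have "real N * G (k / real N) \<le> real N * ((1 / real N) * (\<Sum>i<N. G (ks i)))"
    by (intro mult_left_mono) auto
  then have "real N * G (k / real N) \<le> (\<Sum>i<N. G (ks i))"
    using assms(1) by simp
  then have L: "(\<Sum>i<N. ln (P (z (ks i)))) \<le> real N * ln (P (z (k / real N)))"
    unfolding G_def by (simp add: sum_negf)
  have "(\<Prod>i<N. 1 - eps n (ks i) \<gamma>) = exp (\<Sum>i<N. ln (P (z (ks i))))"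
    by (simp add: exp_sum epsz Ppos)
  also have "\<dots> \<le> exp (real N * ln (P (z (k / real N))))"
    using L by simp
  also have "\<dots> = P (z (k / real N)) ^ N"
    using Ppos by (simp add: ln_realpow[symmetric])
  also have "\<dots> = (\<Prod>i<N. 1 - eps n (k / real N) \<gamma>)"
    by (simp add: epsz)
  finally show ?thesis .
qed

end
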